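(* Let $n\ge 1$ and $k\ge 2$ be integers and let ${\boldsymbol A}\in\mathbb{R}^{n\times n}$ be a symmetric matrix. Let ${\boldsymbol\sigma}=({\boldsymbol\sigma}_1,\dots,{\boldsymbol\sigma}_n)$ be a local maximum of $F_{\boldsymbol A}({\boldsymbol\sigma})=\sum_{i,j=1}^n A_{ij}\langle{\boldsymbol\sigma}_i,{\boldsymbol\sigma}_j\rangle$ over the manifold ${\sf S}(n,k)=\{({\boldsymbol\sigma}_1,\dots,{\boldsymbol\sigma}_n): {\boldsymbol\sigma}_i\in\mathbb{R}^k,\ \|{\boldsymbol\sigma}_i\|_2=1\ \forall i\}$. Then $$ {\sf SDP}({\boldsymbol A})\ \ge\ F_{\boldsymbol A}({\boldsymbol\sigma})\ \ge\ {\sf SDP}({\boldsymbol A})-\frac{8}{\sqrt{k}}\, n\,\|{\boldsymbol A}\|_2, $$ where ${\sf SDP}({\boldsymbol A})=\max\{\langle {\boldsymbol A},{\boldsymbol X}\rangle : {\boldsymbol X}\in\mathbb{R}^{n\times n},\ {\boldsymbol X}\succeq 0,\ X_{ii}=1\ \forall i\in[n]\}$.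
   Context: $\langle{\boldsymbol A},{\boldsymbol B}\rangle={\rm Tr}({\boldsymbol A}^{\sf T}{\boldsymbol B})$ is the matrix scalar product; $\|{\boldsymbol A}\|_2$ is the $\ell_2$ operator norm of ${\boldsymbol A}$. ${\sf S}(n,k)$ is identified with the set of $n\times k$ real matrices whose rows are unit vectors (a product of $n$ copies of the sphere ${\sf S}^{k-1}$), and "local maximum" refers to this manifold structure. *)

theory Defs
  imports "HOL-Analysis.Analysis"
begin

definition sphere_prod :: "((real^'k)^'n) set" where
  "sphere_prod = {\<sigma>. \<forall>i. norm (\<sigma> $ i) = 1}"

definition F_A :: "real^'n^'n \<Rightarrow> (real^'k)^'n \<Rightarrow> real" where
  "F_A A \<sigma> = (\<Sum>i\<in>UNIV. \<Sum>j\<in>UNIV. A $ i $ j * (\<sigma> $ i \<bullet> \<sigma> $ j))"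

definition mat_inner :: "real^'n^'n \<Rightarrow> real^'n^'n \<Rightarrow> real" where
  "mat_inner A B = (\<Sum>i\<in>UNIV. \<Sum>j\<in>UNIV. A $ i $ j * B $ i $ j)"

definition psd :: "real^'n^'n \<Rightarrow> bool" where
  "psd X \<longleftrightarrow> transpose X = X \<and> (\<forall>x. x \<bullet> (X *v x) \<ge> 0)"

definition SDP :: "real^'n^'n \<Rightarrow> real" where
  "SDP A = Sup {mat_inner A X | X. psd X \<and> (\<forall>i. X $ i $ i = 1)}"

definition local_max_on :: "('a::topological_space \<Rightarrow> real) \<Rightarrow> 'a set \<Rightarrow> 'a \<Rightarrow> bool" where
  "local_max_on f S x \<longleftrightarrow> x \<in> S \<and> (\<exists>U. open U \<and> x \<in> U \<and> (\<forall>y\<in>S \<inter> U. f y \<le> f x))"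

definition op_norm2 :: "real^'n^'n \<Rightarrow> real" where
  "op_norm2 A = onorm (\<lambda>x. A *v x)"

end

theory Submission imports Defs begin

definition qf :: "real^'n^'n \<Rightarrow> real^'n \<Rightarrow> real" where
  "qf X x = (\<Sum>i\<in>UNIV. \<Sum>j\<in>UNIV. x$i * X$i$j * x$j)"

lemma inner_mv: "x \<bullet> (X *v x) = qf X x"
  unfolding qf_def inner_vec_def matrix_vector_mult_def
  by (simp add: sum_distrib_left mult.assoc mult.commute mult.left_commute)

lemma psd_qf: "psd X \<longleftrightarrow> transpose X = X \<and> (\<forall>x. qf X x \<ge> 0)"
  unfolding psd_def inner_mv ..

lemma sym_entry: "transpose X = X \<Longrightarrow> X$i$j = X$j$i"
  by (metis transpose_def vec_lambda_beta)

lemma lin_nonneg: assumes "\<And>t::real. 0 \<le> 2*t*b + c" shows "b = 0"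
proof (rule ccontr)
  assume "b \<noteq> 0"
  have "0 \<le> 2*(-(c+1)/(2*b))*b + c" by (rule assms)
  also have "\<dots> = -1" using \<open>b\<noteq>0\<close> by (simp add: field_simps)
  finally show False by simp
qed

definition ev :: "'k \<Rightarrow> real^'k" where "ev a = (\<chi> l. if l = a then 1 else 0)"

lemma ev_comp: "ev a $ l = (if l = a then 1 else 0)" unfolding ev_def by simp

lemma sdelta1: fixes f :: "'a::finite \<Rightarrow> real" shows "(\<Sum>j\<in>UNIV. f j * (if j = q then 1 else 0)) = (f q::real)"
proof -
  have "(\<Sum>j\<in>UNIV. f j * (if j = q then 1 else 0)) = (\<Sum>j\<in>UNIV. if j = q then f j else 0)"
    by (rule sum.cong) auto
  then show ?thesis using sum.delta[of UNIV q f] by simp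
qed

lemma sdelta2: fixes f :: "'a::finite \<Rightarrow> real" shows "(\<Sum>j\<in>UNIV. (if j = q then 1 else 0) * f j) = (f q::real)"
  using sdelta1[of f q] by (simp add: mult.commute)

definition bf :: "real^'n^'n \<Rightarrow> real^'n \<Rightarrow> real^'n \<Rightarrow> real" where
  "bf X x y = (\<Sum>i\<in>UNIV. \<Sum>j\<in>UNIV. x$i * X$i$j * y$j)"

lemma qf_bf: "qf X x = bf X x x" unfolding qf_def bf_def ..

lemma bf_alt: "bf X x z = (\<Sum>i\<in>UNIV. x$i * (\<Sum>j\<in>UNIV. X$i$j * z$j))"
  unfolding bf_def by (simp add: sum_distrib_left mult.assoc)

lemma bf_alt2: "bf X x z = (\<Sum>j\<in>UNIV. (\<Sum>i\<in>UNIV. x$i * X$i$j) * z$j)"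
  unfolding bf_def sum_distrib_right by (rule sum.swap)

lemma bf_add1: "bf X (x + y) z = bf X x z + bf X y z"
  unfolding bf_alt by (simp add: distrib_right sum.distrib)
lemma bf_diff1: "bf X (x - y) z = bf X x z - bf X y z"
  unfolding bf_alt by (simp add: left_diff_distrib sum_subtractf)
lemma bf_scale1: "bf X (c *\<^sub>R x) z = c * bf X x z"
  unfolding bf_alt by (simp add: sum_distrib_left mult.assoc)
lemma bf_add2: "bf X z (x + y) = bf X z x + bf X z y"
  unfolding bf_alt2 by (simp add: distrib_left sum.distrib)
lemma bf_diff2: "bf X z (x - y) = bf X z x - bf X z y"
  unfolding bf_alt2 by (simp add: right_diff_distrib sum_subtractf)
lemma bf_scale2: "bf X z (c *\<^sub>R x) = c * bf X z x"
  unfolding bf_alt2 by (simp add: sum_distrib_left mult.left_commute)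

lemma bf_ev1: "bf X (ev p) z = (\<Sum>j\<in>UNIV. X$p$j * z$j)"
  unfolding bf_alt ev_comp by (rule sdelta2)
lemma bf_ev2: "bf X z (ev q) = (\<Sum>i\<in>UNIV. z$i * X$i$q)"
  unfolding bf_alt2 ev_comp by (rule sdelta1)
lemma bf_evev: "bf X (ev p) (ev q) = X$p$q"
  unfolding bf_ev1 ev_comp by (rule sdelta1)

lemmas bf_simps = bf_add1 bf_diff1 bf_scale1 bf_add2 bf_diff2 bf_scale2 bf_evev

lemma qf_two:
  shows "qf X (t *\<^sub>R ev p + ev j) = t*t*X$p$p + t*X$p$j + t*X$j$p + X$j$j"
  unfolding qf_bf bf_simps by (simp add: algebra_simps)

lemma psd_diag: "psd X \<Longrightarrow> X$p$p \<ge> 0"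
  using bf_evev[of X p p] unfolding psd_qf qf_bf by metis

lemma psd_zero_diag:
  assumes "psd X" "X$p$p = 0" shows "X$p$j = 0"
proof -
  have sym: "X$j$p = X$p$j" using assms(1) sym_entry psd_def by metis
  show ?thesis
  proof (rule lin_nonneg)
    fix t :: real
    have "0 \<le> qf X (t *\<^sub>R ev p + ev j)"
      using assms(1) by (simp add: psd_qf)
    thus "0 \<le> 2*t*X$p$j + X$j$j" unfolding qf_two using assms(2) sym by simp
  qed
qed

lemma qf_shift:
  "qf X (x - s *\<^sub>R ev p)
   = qf X x - s * (\<Sum>j\<in>UNIV. X$p$j * x$j) - s * (\<Sum>i\<in>UNIV. x$i * X$i$p) + s * s * X$p$p"
proof -
  have "qf X (x - s *\<^sub>R ev p) = bf X x x - s * bf X (ev p) x - s * bf X x (ev p) + s * s * bf X (ev p) (ev p)"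
    unfolding qf_bf bf_diff1 bf_diff2 bf_scale1 bf_scale2 by (simp add: algebra_simps)
  then show ?thesis unfolding bf_evev unfolding bf_ev1 bf_ev2 qf_bf .
qed

lemma qf_outer:
  "qf (\<chi> i j. X$i$j - v$i * v$j) x = qf X x - (\<Sum>i\<in>UNIV. x$i * v$i)^2"
proof -
  have "qf (\<chi> i j. X$i$j - v$i * v$j) x = qf X x - (\<Sum>i\<in>UNIV. \<Sum>j\<in>UNIV. (x$i * v$i) * (x$j * v$j))"
    unfolding qf_def sum_subtractf[symmetric] by (intro sum.cong refl) (simp add: algebra_simps)
  also have "\<dots> = qf X x - (\<Sum>i\<in>UNIV. x$i * v$i)^2"
    unfolding power2_eq_square sum_product ..
  finally show ?thesis .
qed

lemma fac_aux:
  fixes D :: "'n::finite set"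
  shows "finite D \<Longrightarrow> \<forall>X. psd X \<and> (\<forall>i j. i \<notin> D \<or> j \<notin> D \<longrightarrow> X$i$j = 0) \<longrightarrow>
     (\<exists>w::'n \<Rightarrow> real^'n. \<forall>i j. X$i$j = (\<Sum>p\<in>D. w p $ i * w p $ j))"
proof (induction D rule: finite_induct)
  case empty
  then show ?case by auto
next
  case (insert p D)
  show ?case
  proof (intro allI impI, elim conjE)
    fix X :: "real^'n^'n"
    assume ps: "psd X" and van: "\<forall>i j. i \<notin> insert p D \<or> j \<notin> insert p D \<longrightarrow> X$i$j = 0"
    have sym: "\<And>i j. X$i$j = X$j$i" using ps sym_entry psd_def by metis
    show "\<exists>w::'n \<Rightarrow> real^'n. \<forall>i j. X$i$j = (\<Sum>p\<in>insert p D. w p $ i * w p $ j)"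
    proof (cases "X$p$p = 0")
      case True
      have z: "\<And>j. X$p$j = 0" using psd_zero_diag[OF ps True] .
      have "\<forall>i j. i \<notin> D \<or> j \<notin> D \<longrightarrow> X$i$j = 0"
        using van z sym by (metis insert_iff)
      then obtain w :: "'n \<Rightarrow> real^'n" where w: "\<forall>i j. X$i$j = (\<Sum>p\<in>D. w p $ i * w p $ j)"
        using insert.IH ps by blast
      have "\<forall>i j. X$i$j = (\<Sum>q\<in>insert p D. (w(p:=0)) q $ i * (w(p:=0)) q $ j)"
      proof (intro allI)
        fix i j
        have "(\<Sum>q\<in>D. (w(p:=0)) q $ i * (w(p:=0)) q $ j) = (\<Sum>q\<in>D. w q $ i * w q $ j)"
          using insert.hyps(2) by (intro sum.cong) auto
        then show "X$i$j = (\<Sum>q\<in>insert p D. (w(p:=0)) q $ i * (w(p:=0)) q $ j)"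
          using insert.hyps w by simp
      qed
      then show ?thesis by blast
    next
      case False
      have pos: "X$p$p > 0" using psd_diag[OF ps, of p] False by linarith
      define v :: "real^'n" where "v = (\<chi> i. X$i$p / sqrt (X$p$p))"
      define X' where "X' = (\<chi> i j. X$i$j - v$i * v$j)"
      have sq: "sqrt (X$p$p) * sqrt (X$p$p) = X$p$p" using pos by simp
      have "psd X'"
        unfolding psd_qf
      proof (intro conjI allI)
        show "transpose X' = X'"
          unfolding X'_def transpose_def by (simp add: vec_eq_iff sym mult.commute)
      next
        fix x :: "real^'n"
        define c where "c = (\<Sum>i\<in>UNIV. x$i * X$i$p)"
        have c2: "(\<Sum>j\<in>UNIV. X$p$j * x$j) = c" unfolding c_def
          by (simp add: sym mult.commute)
        have "0 \<le> qf X (x - (c / X$p$p) *\<^sub>R ev p)"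
          using ps by (simp add: psd_qf)
        also have "\<dots> = qf X x - c*c / X$p$p"
          unfolding qf_shift c2 c_def[symmetric] using pos by (simp add: field_simps)
        finally have A: "c*c / X$p$p \<le> qf X x" by simp
        have "(\<Sum>i\<in>UNIV. x$i * v$i) = c / sqrt (X$p$p)"
          unfolding v_def c_def by (simp add: sum_divide_distrib)
        then have "(\<Sum>i\<in>UNIV. x$i * v$i)^2 = c*c / X$p$p"
          using pos by (simp add: power2_eq_square sq)
        then show "0 \<le> qf X' x" unfolding X'_def qf_outer using A by simp
      qed
      moreover have "\<forall>i j. i \<notin> D \<or> j \<notin> D \<longrightarrow> X'$i$j = 0"
      proof (intro allI impI)
        fix i j assume "i \<notin> D \<or> j \<notin> D"
        have vz: "\<And>i. i \<notin> insert p D \<Longrightarrow> v$i = 0" unfolding v_def using van by simp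
        have vv: "v$p * v$j = X$p$j" "v$i * v$p = X$i$p" for i j
          unfolding v_def using pos sq sym by (simp_all add: field_simps)
        show "X'$i$j = 0"
          using \<open>i \<notin> D \<or> j \<notin> D\<close> van vz vv unfolding X'_def
          by (cases "i = p"; cases "j = p") auto
      qed
      ultimately obtain w :: "'n \<Rightarrow> real^'n" where w: "\<forall>i j. X'$i$j = (\<Sum>p\<in>D. w p $ i * w p $ j)"
        using insert.IH by blast
      have "\<forall>i j. X$i$j = (\<Sum>q\<in>insert p D. (w(p:=v)) q $ i * (w(p:=v)) q $ j)"
      proof (intro allI)
        fix i j
        have "(\<Sum>q\<in>D. (w(p:=v)) q $ i * (w(p:=v)) q $ j) = (\<Sum>q\<in>D. w q $ i * w q $ j)"
          using insert.hyps(2) by (intro sum.cong) auto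
        then show "X$i$j = (\<Sum>q\<in>insert p D. (w(p:=v)) q $ i * (w(p:=v)) q $ j)"
          using insert.hyps w[rule_format, of i j] unfolding X'_def by simp
      qed
      then show ?thesis by blast
    qed
  qed
qed

lemma psd_factor:
  fixes X :: "real^'n^'n"
  assumes "psd X"
  shows "\<exists>w::'n \<Rightarrow> real^'n. \<forall>i j. X$i$j = (\<Sum>p\<in>UNIV. w p $ i * w p $ j)"
  using fac_aux[of UNIV] assms by auto


lemma opn_nonneg: "op_norm2 A \<ge> 0"
  unfolding op_norm2_def by (rule onorm_pos_le[OF matrix_vector_mul_bounded_linear])

lemma GL1:
  fixes A :: "real^'n^'n"
  shows "\<bar>\<Sum>i\<in>UNIV. \<Sum>j\<in>UNIV. A$i$j * (z$i * z$j)\<bar> \<le> op_norm2 A * (\<Sum>i\<in>UNIV. z$i * z$i)"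
proof -
  have e: "(\<Sum>i\<in>UNIV. \<Sum>j\<in>UNIV. A$i$j * (z$i * z$j)) = z \<bullet> (A *v z)"
    unfolding inner_vec_def matrix_vector_mult_def
    by (simp add: sum_distrib_left mult.assoc mult.commute mult.left_commute)
  have n: "norm z * norm z = (\<Sum>i\<in>UNIV. z$i * z$i)"
    using power2_norm_eq_inner[of z] by (simp add: power2_eq_square inner_vec_def)
  have "\<bar>z \<bullet> (A *v z)\<bar> \<le> norm z * norm (A *v z)" by (rule Cauchy_Schwarz_ineq2)
  also have "\<dots> \<le> norm z * (op_norm2 A * norm z)"
    unfolding op_norm2_def
    by (intro mult_left_mono onorm[OF matrix_vector_mul_bounded_linear]) simp
  finally show ?thesis unfolding e n[symmetric] by (simp add: algebra_simps)
qed

lemma GL: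
  fixes A Y :: "real^'n^'n" and z :: "'q \<Rightarrow> real^'n"
  assumes "finite Q" "\<And>i j. Y$i$j = (\<Sum>q\<in>Q. z q $ i * z q $ j)"
  shows "\<bar>mat_inner A Y\<bar> \<le> op_norm2 A * (\<Sum>i\<in>UNIV. Y$i$i)"
proof -
  have "mat_inner A Y = (\<Sum>q\<in>Q. \<Sum>i\<in>UNIV. \<Sum>j\<in>UNIV. A$i$j * (z q$i * z q$j))"
    unfolding mat_inner_def assms(2) sum_distrib_left
    by (subst sum.swap, rule sum.cong, simp, subst sum.swap, simp)
  then have "\<bar>mat_inner A Y\<bar> \<le> (\<Sum>q\<in>Q. \<bar>\<Sum>i\<in>UNIV. \<Sum>j\<in>UNIV. A$i$j * (z q$i * z q$j)\<bar>)"
    by (simp add: sum_abs)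
  also have "\<dots> \<le> (\<Sum>q\<in>Q. op_norm2 A * (\<Sum>i\<in>UNIV. z q$i * z q$i))"
    by (intro sum_mono GL1)
  also have "\<dots> = op_norm2 A * (\<Sum>i\<in>UNIV. Y$i$i)"
    unfolding assms(2) sum_distrib_left[symmetric] by (subst sum.swap) simp
  finally show ?thesis .
qed

lemma hadamard_rep:
  fixes z :: "'q \<Rightarrow> real^'n" and y :: "'r \<Rightarrow> real^'n"
  assumes "finite Q" "finite R"
  shows "(\<Sum>q\<in>Q. z q $ i * z q $ j) * (\<Sum>r\<in>R. y r $ i * y r $ j)
    = (\<Sum>qr\<in>Q \<times> R. (\<chi> l. z (fst qr) $ l * y (snd qr) $ l) $ i * (\<chi> l. z (fst qr) $ l * y (snd qr) $ l) $ j)"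
  unfolding sum_product sum.cartesian_product
  by (intro sum.cong refl) (simp add: split_beta algebra_simps)

lemma rep_psd:
  fixes z :: "'q \<Rightarrow> real^'n"
  assumes "finite Q" "\<And>i j. Y$i$j = (\<Sum>q\<in>Q. z q $ i * z q $ j)"
  shows "psd Y"
  unfolding psd_qf
proof (intro conjI allI)
  show "transpose Y = Y" unfolding transpose_def by (simp add: vec_eq_iff assms(2) mult.commute)
next
  fix x :: "real^'n"
  have "qf Y x = (\<Sum>i\<in>UNIV. \<Sum>j\<in>UNIV. \<Sum>q\<in>Q. (x$i * z q $ i) * (x$j * z q $ j))"
    unfolding qf_def assms(2) sum_distrib_left sum_distrib_right
    by (intro sum.cong refl) (simp add: algebra_simps)
  also have "\<dots> = (\<Sum>i\<in>UNIV. \<Sum>q\<in>Q. \<Sum>j\<in>UNIV. (x$i * z q $ i) * (x$j * z q $ j))"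
    by (intro sum.cong refl) (rule sum.swap)
  also have "\<dots> = (\<Sum>q\<in>Q. \<Sum>i\<in>UNIV. \<Sum>j\<in>UNIV. (x$i * z q $ i) * (x$j * z q $ j))"
    by (rule sum.swap)
  also have "\<dots> = (\<Sum>q\<in>Q. (\<Sum>i\<in>UNIV. x$i * z q $ i)^2)"
    unfolding power2_eq_square sum_product ..
  finally have "qf Y x = (\<Sum>q\<in>Q. (\<Sum>i\<in>UNIV. x$i * z q $ i)^2)" .
  then show "0 \<le> qf Y x" by (simp add: sum_nonneg)
qed


lemma key_id:
  fixes ci cj t a b U S :: real
  assumes "ci > 0" "cj > 0" "ci*ci = 1 + t^2*a" "cj*cj = 1 + t^2*b"
  shows "t^2 * (U/(ci*cj) + S * (-(a+b+t^2*a*b)/(ci*cj*(1+ci*cj)))) = (S + t^2*U)/(ci*cj) - S"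
proof -
  define q where "q = ci*cj"
  have q: "q > 0" unfolding q_def using assms by simp
  have d0: "q + q*q > 0" using q by (intro add_pos_pos mult_pos_pos)
  have d: "q + q*q \<noteq> 0" "q*(1+q) \<noteq> 0" "1 + q \<noteq> 0" using d0 q by (simp_all add: distrib_left)
  have "q*q = (ci*ci)*(cj*cj)" unfolding q_def by (simp add: algebra_simps)
  also have "\<dots> = (1 + t^2*a)*(1 + t^2*b)" using assms(3,4) by simp
  finally have qq: "t^2*(a+b+t^2*a*b) = q*q - 1" by (simp add: algebra_simps power2_eq_square)
  have "t^2 * (U/q + S * (-(a+b+t^2*a*b)/(q*(1+q)))) = t^2*U/q - S*(t^2*(a+b+t^2*a*b))/(q*(1+q))"
    using q d by (simp add: field_simps)
  also have "\<dots> = t^2*U/q - (S*(q - 1))*(q+1)/(q*(q+1))" unfolding qq by (simp add: algebra_simps)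
  also have "\<dots> = t^2*U/q - (S*(q - 1))/q"
    using nonzero_mult_divide_mult_cancel_right[of "q+1" "S*(q-1)" q] d(3) by (simp add: add.commute)
  also have "\<dots> = (S + t^2*U)/q - S" using q by (simp add: field_simps)
  finally show ?thesis unfolding q_def by (simp add: mult.assoc)
qed

lemma soc:
  fixes A :: "real^'n^'n" and \<sigma> u :: "(real^'k)^'n"
  assumes lm: "local_max_on (F_A A) sphere_prod \<sigma>" and orth: "\<And>i. u$i \<bullet> \<sigma>$i = 0"
  shows "(\<Sum>i\<in>UNIV. \<Sum>j\<in>UNIV. A$i$j * (u$i \<bullet> u$j))
     \<le> (\<Sum>i\<in>UNIV. \<Sum>j\<in>UNIV. A$i$j * ((\<sigma>$i \<bullet> \<sigma>$j) * ((u$i \<bullet> u$i) + (u$j \<bullet> u$j)) / 2))"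
proof -
  from lm obtain U where U: "open U" "\<sigma> \<in> U" "\<forall>y\<in>sphere_prod \<inter> U. F_A A y \<le> F_A A \<sigma>"
    and sp: "\<sigma> \<in> sphere_prod" unfolding local_max_on_def by blast
  have n1: "\<And>i. \<sigma>$i \<bullet> \<sigma>$i = 1" using sp unfolding sphere_prod_def by (simp add: norm_eq_1)
  define a where "a i = u$i \<bullet> u$i" for i
  have a0: "\<And>i. a i \<ge> 0" unfolding a_def by simp
  define c where "c t i = sqrt (1 + t^2 * a i)" for t :: real and i
  have cpos: "\<And>t i. c t i > 0" unfolding c_def using a0
    by (metis add_pos_nonneg mult_nonneg_nonneg real_sqrt_gt_zero zero_le_power2 zero_less_one)
  have p1: "\<And>x i. 1 + x^2 * a i > 0" using a0 by (simp add: add_pos_nonneg)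
  have cc: "\<And>t i. c t i * c t i = 1 + t^2 * a i" unfolding c_def using a0 by simp
  have cneg: "\<And>t i. c (-t) i = c t i" unfolding c_def by simp
  have nrm: "norm (\<sigma>$i + t *\<^sub>R u$i) = c t i" for t i
  proof -
    have "(\<sigma>$i + t *\<^sub>R u$i) \<bullet> (\<sigma>$i + t *\<^sub>R u$i) = 1 + t^2 * a i"
      using n1[of i] orth[of i] unfolding a_def
      by (simp add: inner_add_left inner_add_right inner_commute power2_eq_square)
    then show ?thesis unfolding c_def norm_eq_sqrt_inner by simp
  qed
  define \<gamma> where "\<gamma> t = (\<chi> i. (1 / c t i) *\<^sub>R (\<sigma>$i + t *\<^sub>R u$i))" for t
  have \<gamma>sp: "\<gamma> t \<in> sphere_prod" for t
    unfolding sphere_prod_def \<gamma>_def using nrm cpos by (simp add: abs_of_pos less_imp_neq[symmetric])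
  have \<gamma>0: "\<gamma> 0 = \<sigma>" unfolding \<gamma>_def c_def by (simp add: vec_eq_iff)
  have cont1: "continuous_on UNIV (\<lambda>t. \<gamma> t)"
    unfolding \<gamma>_def c_def using a0 p1
    by (intro continuous_intros) (auto simp: add_pos_nonneg less_imp_neq[symmetric])
  have cont2: "continuous_on UNIV (\<lambda>t. \<gamma> (-t))"
    unfolding \<gamma>_def c_def using a0 p1
    by (intro continuous_intros) (auto simp: add_pos_nonneg less_imp_neq[symmetric])
  have t1: "((\<lambda>t. \<gamma> t) \<longlongrightarrow> \<sigma>) (at 0)"
  proof -
    have "isCont (\<lambda>t. \<gamma> t) 0" using cont1 continuous_on_eq_continuous_at open_UNIV by blast
    then show ?thesis unfolding continuous_at using \<gamma>0 by simp
  qed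
  have t2: "((\<lambda>t. \<gamma> (-t)) \<longlongrightarrow> \<sigma>) (at 0)"
  proof -
    have "isCont (\<lambda>t. \<gamma> (-t)) 0" using cont2 continuous_on_eq_continuous_at open_UNIV by blast
    then show ?thesis unfolding continuous_at using \<gamma>0 by simp
  qed
  have ev: "\<forall>\<^sub>F t in at 0. F_A A (\<gamma> t) \<le> F_A A \<sigma> \<and> F_A A (\<gamma> (-t)) \<le> F_A A \<sigma>"
  proof -
    have "\<forall>\<^sub>F t in at 0. \<gamma> t \<in> U" using topological_tendstoD[OF t1 U(1,2)] .
    moreover have "\<forall>\<^sub>F t in at 0. \<gamma> (-t) \<in> U" using topological_tendstoD[OF t2 U(1,2)] .
    ultimately show ?thesis
      by eventually_elim (use U(3) \<gamma>sp in blast)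
  qed
  define h where "h t i j = -(a i + a j + t^2 * a i * a j) / (c t i * c t j * (1 + c t i * c t j))" for t i j
  define G where "G t = (\<Sum>i\<in>UNIV. \<Sum>j\<in>UNIV. A$i$j * ((u$i \<bullet> u$j)/(c t i * c t j) + (\<sigma>$i \<bullet> \<sigma>$j) * h t i j))" for t
  have Fg: "F_A A (\<gamma> t) = (\<Sum>i\<in>UNIV. \<Sum>j\<in>UNIV. A$i$j * (((\<sigma>$i + t *\<^sub>R u$i) \<bullet> (\<sigma>$j + t *\<^sub>R u$j)) / (c t i * c t j)))" for t
    unfolding F_A_def \<gamma>_def by (simp add: inner_scaleR_left inner_scaleR_right ac_simps)
  have ident: "t^2 * G t = (F_A A (\<gamma> t) + F_A A (\<gamma> (-t)))/2 - F_A A \<sigma>" for t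
  proof -
    define P1 where "P1 i j = (\<sigma>$i + t *\<^sub>R u$i) \<bullet> (\<sigma>$j + t *\<^sub>R u$j)" for i j
    define P2 where "P2 i j = (\<sigma>$i + (-t) *\<^sub>R u$i) \<bullet> (\<sigma>$j + (-t) *\<^sub>R u$j)" for i j
    have Pe: "P1 i j + P2 i j = 2*((\<sigma>$i \<bullet> \<sigma>$j) + t^2*(u$i \<bullet> u$j))" for i j
      unfolding P1_def P2_def
      by (simp add: inner_add_left inner_add_right inner_commute power2_eq_square algebra_simps)
    have "(F_A A (\<gamma> t) + F_A A (\<gamma> (-t)))/2 - F_A A \<sigma>
      = (\<Sum>i\<in>UNIV. \<Sum>j\<in>UNIV. (A$i$j * (P1 i j / (c t i * c t j)) + A$i$j * (P2 i j / (c t i * c t j)))/2 - A$i$j * (\<sigma>$i \<bullet> \<sigma>$j))"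
    proof -
      have E: "F_A A (\<gamma> t) + F_A A (\<gamma> (-t)) = (\<Sum>i\<in>UNIV. \<Sum>j\<in>UNIV. A$i$j * (P1 i j / (c t i * c t j)) + A$i$j * (P2 i j / (c t i * c t j)))"
        unfolding Fg[of t] Fg[of "-t"] cneg P1_def P2_def by (simp only: sum.distrib)
      show ?thesis unfolding E by (simp only: sum_divide_distrib F_A_def sum_subtractf)
    qed
    also have "\<dots> = t^2 * G t"
      unfolding G_def h_def sum_distrib_left
    proof (intro sum.cong refl)
      fix i j
      have "(A$i$j * (P1 i j / (c t i * c t j)) + A$i$j * (P2 i j / (c t i * c t j)))/2
          = A$i$j * ((P1 i j + P2 i j) / (c t i * c t j)) / 2"
        by (simp add: add_divide_distrib distrib_left)
      also have "\<dots> = A$i$j * (((\<sigma>$i \<bullet> \<sigma>$j) + t^2*(u$i \<bullet> u$j)) / (c t i * c t j))"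
        unfolding Pe using cpos[of t i] cpos[of t j] by (simp add: field_simps)
      finally have e1: "(A$i$j * (P1 i j / (c t i * c t j)) + A$i$j * (P2 i j / (c t i * c t j)))/2
          = A$i$j * (((\<sigma>$i \<bullet> \<sigma>$j) + t^2*(u$i \<bullet> u$j)) / (c t i * c t j))" .
      have e2: "t^2 * ((u$i \<bullet> u$j)/(c t i * c t j) + (\<sigma>$i \<bullet> \<sigma>$j) * (-(a i + a j + t^2 * a i * a j) / (c t i * c t j * (1 + c t i * c t j))))
          = ((\<sigma>$i \<bullet> \<sigma>$j) + t^2*(u$i \<bullet> u$j)) / (c t i * c t j) - (\<sigma>$i \<bullet> \<sigma>$j)"
        by (rule key_id[OF cpos cpos cc cc])
      show "(A$i$j * (P1 i j / (c t i * c t j)) + A$i$j * (P2 i j / (c t i * c t j)))/2 - A$i$j * (\<sigma>$i \<bullet> \<sigma>$j)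
          = t^2 * (A$i$j * ((u$i \<bullet> u$j)/(c t i * c t j) + (\<sigma>$i \<bullet> \<sigma>$j) * (-(a i + a j + t^2 * a i * a j) / (c t i * c t j * (1 + c t i * c t j)))))"
        unfolding e1 mult.left_commute[of "t^2" "A$i$j"] e2 by (simp only: right_diff_distrib)
    qed
    finally show ?thesis by simp
  qed
  have evG: "\<forall>\<^sub>F t in at 0. G t \<le> 0"
    using ev eventually_at_filter[of "\<lambda>t. t \<noteq> 0" 0 UNIV]
  proof -
    have "\<forall>\<^sub>F t in at 0. t \<noteq> 0" by (simp add: eventually_at_filter)
    with ev show ?thesis
    proof eventually_elim
      case (elim t)
      then have "t^2 * G t \<le> 0" unfolding ident by simp
      moreover have "t^2 > 0" using elim by simp
      ultimately show "G t \<le> 0" by (simp add: mult_le_0_iff)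
    qed
  qed
  have contG: "continuous_on UNIV G"
    unfolding G_def h_def c_def using a0 p1
    by (intro continuous_intros) (auto simp: add_pos_nonneg less_imp_neq[symmetric])
  have "(G \<longlongrightarrow> G 0) (at 0)"
  proof -
    have "isCont G 0" using contG continuous_on_eq_continuous_at open_UNIV by blast
    then show ?thesis unfolding continuous_at .
  qed
  then have "G 0 \<le> 0" using evG by (rule tendsto_upperbound) simp
  moreover have "G 0 = (\<Sum>i\<in>UNIV. \<Sum>j\<in>UNIV. A$i$j * (u$i \<bullet> u$j)) -
      (\<Sum>i\<in>UNIV. \<Sum>j\<in>UNIV. A$i$j * ((\<sigma>$i \<bullet> \<sigma>$j) * ((u$i \<bullet> u$i) + (u$j \<bullet> u$j)) / 2))"
    unfolding G_def h_def c_def a_def sum_subtractf[symmetric]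
    by (intro sum.cong refl) (simp add: field_simps)
  ultimately show ?thesis by simp
qed


lemma ev_inner1: "ev a \<bullet> v = v$a" unfolding inner_vec_def ev_comp inner_real_def by (rule sdelta2)
lemma ev_inner2: "v \<bullet> ev a = v$a" using ev_inner1 by (simp add: inner_commute)

lemma sum_sq_inner: "(\<Sum>a\<in>UNIV. x$a * y$a) = x \<bullet> (y::real^'k)"
  unfolding inner_vec_def by simp

lemma T_lemma:
  fixes x y :: "real^'k"
  assumes "x \<bullet> x = 1" "y \<bullet> y = 1"
  shows "(\<Sum>a\<in>UNIV. (ev a - x$a *\<^sub>R x) \<bullet> (ev a - y$a *\<^sub>R y)) = real CARD('k) - 2 + (x \<bullet> y) * (x \<bullet> y)"
proof -
  have "(\<Sum>a\<in>UNIV. (ev a - x$a *\<^sub>R x) \<bullet> (ev a - y$a *\<^sub>R y))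
     = (\<Sum>a\<in>UNIV. 1 - y$a * y$a - x$a * x$a + (x \<bullet> y) * (x$a * y$a))"
    by (intro sum.cong refl) (simp add: inner_diff_left inner_diff_right ev_inner1 ev_inner2 ev_comp algebra_simps)
  also have "\<dots> = real CARD('k) - (y \<bullet> y) - (x \<bullet> x) + (x \<bullet> y) * (x \<bullet> y)"
    by (simp add: sum.distrib sum_subtractf sum_distrib_left[symmetric] sum_sq_inner)
  finally show ?thesis using assms by simp
qed

lemma swap3:
  "(\<Sum>a\<in>A. \<Sum>i\<in>I. \<Sum>j\<in>J. f a i j) = (\<Sum>i\<in>I. \<Sum>j\<in>J. \<Sum>a\<in>A. (f a i j :: real))"
  by (subst sum.swap) (rule sum.cong[OF refl], rule sum.swap)

lemma swap4:
  fixes A :: "real^'n^'n" and f :: "'a::finite \<Rightarrow> 'b::finite \<Rightarrow> 'n \<Rightarrow> 'n \<Rightarrow> real"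
  shows "(\<Sum>a\<in>(UNIV::'a::finite set). \<Sum>p\<in>(UNIV::'b::finite set). \<Sum>i\<in>UNIV. \<Sum>j\<in>UNIV. A$i$j * f a p i j)
    = (\<Sum>i\<in>UNIV. \<Sum>j\<in>UNIV. A$i$j * (\<Sum>a\<in>UNIV. \<Sum>p\<in>UNIV. f a p i j))"
proof -
  have "(\<Sum>a\<in>(UNIV::'a set). \<Sum>p\<in>(UNIV::'b set). \<Sum>i\<in>UNIV. \<Sum>j\<in>UNIV. A$i$j * f a p i j)
    = (\<Sum>a\<in>(UNIV::'a set). \<Sum>i\<in>UNIV. \<Sum>j\<in>UNIV. \<Sum>p\<in>(UNIV::'b set). A$i$j * f a p i j)"
    by (rule sum.cong[OF refl], rule swap3)
  also have "\<dots> = (\<Sum>i\<in>UNIV. \<Sum>j\<in>UNIV. \<Sum>a\<in>(UNIV::'a set). \<Sum>p\<in>(UNIV::'b set). A$i$j * f a p i j)"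
    by (rule swap3)
  finally show ?thesis by (simp only: sum_distrib_left)
qed

theorem theorem1:
  fixes A :: "real^'n^'n" and \<sigma> :: "(real^'k)^'n"
  assumes "CARD('k) \<ge> 2"
    and "transpose A = A"
    and "local_max_on (F_A A) sphere_prod \<sigma>"
  shows "SDP A \<ge> F_A A \<sigma> \<and>
         F_A A \<sigma> \<ge> SDP A - 8 / sqrt (real CARD('k)) * real CARD('n) * op_norm2 A"
proof -
  define k where "k = real CARD('k)"
  define n where "n = real CARD('n)"
  define L where "L = op_norm2 A"
  have L0: "L \<ge> 0" unfolding L_def by (rule opn_nonneg)
  have k2: "k \<ge> 2" unfolding k_def using assms(1) by simp
  have sp: "\<sigma> \<in> sphere_prod" using assms(3) unfolding local_max_on_def by blast
  have n1: "\<And>i. \<sigma>$i \<bullet> \<sigma>$i = 1" using sp unfolding sphere_prod_def by (simp add: norm_eq_1)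
  define Feas where "Feas = {mat_inner A X | X. psd X \<and> (\<forall>i. X $ i $ i = 1)}"
  have SDPd: "SDP A = Sup Feas" unfolding SDP_def Feas_def ..
  define y :: "'k \<Rightarrow> real^'n" where "y a = (\<chi> i. \<sigma>$i$a)" for a
  have Srep: "\<And>i j. \<sigma>$i \<bullet> \<sigma>$j = (\<Sum>a\<in>UNIV. y a $ i * y a $ j)"
    unfolding y_def inner_vec_def by simp
  have upper: "mat_inner A X \<le> n * L" if psdX: "psd X" and dX: "\<forall>i. X$i$i = 1" for X
  proof -
    obtain w :: "'n \<Rightarrow> real^'n" where w: "\<forall>i j. X$i$j = (\<Sum>p\<in>UNIV. w p $ i * w p $ j)"
      using psd_factor[OF psdX] by blast
    have "\<bar>mat_inner A X\<bar> \<le> L * (\<Sum>i\<in>UNIV. X$i$i)"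
      unfolding L_def by (rule GL[of UNIV]) (use w in auto)
    then show ?thesis using dX unfolding n_def by (simp add: mult.commute)
  qed
  define S where "S = (\<chi> i j. \<sigma>$i \<bullet> \<sigma>$j)"
  have Sfeas: "psd S \<and> (\<forall>i. S$i$i = 1)"
    using rep_psd[of UNIV S y] Srep n1 unfolding S_def by auto
  have FS: "mat_inner A S = F_A A \<sigma>" unfolding mat_inner_def F_A_def S_def by simp
  have FinFeas: "F_A A \<sigma> \<in> Feas" unfolding Feas_def by (rule CollectI, rule exI[of _ S]) (use Sfeas FS in auto)
  have bdd: "bdd_above Feas" unfolding Feas_def bdd_above_def using upper by blast
  have part1: "F_A A \<sigma> \<le> SDP A" unfolding SDPd by (rule cSup_upper[OF FinFeas bdd])
  have main: "mat_inner A X \<le> F_A A \<sigma> + 2 * n * L / (k - 1)" if psdX: "psd X" and dX: "\<forall>i. X$i$i = 1" for X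
  proof -
    obtain w :: "'n \<Rightarrow> real^'n" where w: "\<forall>i j. X$i$j = (\<Sum>p\<in>UNIV. w p $ i * w p $ j)"
      using psd_factor[OF psdX] by blast
    define u :: "'k \<Rightarrow> 'n \<Rightarrow> (real^'k)^'n"
      where "u a p = (\<chi> i. w p $ i *\<^sub>R (ev a - \<sigma>$i$a *\<^sub>R \<sigma>$i))" for a p
    have orth: "u a p $ i \<bullet> \<sigma>$i = 0" for a p i
      unfolding u_def using n1[of i] by (simp add: inner_diff_left ev_inner1)
    have uu: "(\<Sum>a\<in>UNIV. \<Sum>p\<in>UNIV. u a p $ i \<bullet> u a p $ j) = X$i$j * (k - 2 + (\<sigma>$i \<bullet> \<sigma>$j) * (\<sigma>$i \<bullet> \<sigma>$j))" for i j
    proof -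
      have "(\<Sum>a\<in>UNIV. \<Sum>p\<in>UNIV. u a p $ i \<bullet> u a p $ j)
         = (\<Sum>a\<in>UNIV. (\<Sum>p\<in>UNIV. w p $ i * w p $ j) * ((ev a - \<sigma>$i$a *\<^sub>R \<sigma>$i) \<bullet> (ev a - \<sigma>$j$a *\<^sub>R \<sigma>$j)))"
        unfolding u_def by (simp add: sum_distrib_right mult.assoc mult.left_commute)
      also have "\<dots> = X$i$j * (k - 2 + (\<sigma>$i \<bullet> \<sigma>$j) * (\<sigma>$i \<bullet> \<sigma>$j))"
        unfolding w[rule_format, symmetric] sum_distrib_left[symmetric] T_lemma[OF n1 n1] k_def ..
      finally show ?thesis .
    qed
    have soc_all: "(\<Sum>a\<in>UNIV. \<Sum>p\<in>UNIV. \<Sum>i\<in>UNIV. \<Sum>j\<in>UNIV. A$i$j * (u a p $ i \<bullet> u a p $ j))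
      \<le> (\<Sum>a\<in>UNIV. \<Sum>p\<in>UNIV. \<Sum>i\<in>UNIV. \<Sum>j\<in>UNIV. A$i$j * ((\<sigma>$i \<bullet> \<sigma>$j) * ((u a p $ i \<bullet> u a p $ i) + (u a p $ j \<bullet> u a p $ j)) / 2))"
      by (intro sum_mono soc[OF assms(3)] orth)
    have lhs: "(\<Sum>a\<in>UNIV. \<Sum>p\<in>UNIV. \<Sum>i\<in>UNIV. \<Sum>j\<in>UNIV. A$i$j * (u a p $ i \<bullet> u a p $ j))
       = (k - 2) * mat_inner A X + (\<Sum>i\<in>UNIV. \<Sum>j\<in>UNIV. A$i$j * (X$i$j * (\<sigma>$i \<bullet> \<sigma>$j) * (\<sigma>$i \<bullet> \<sigma>$j)))"
      unfolding swap4 uu mat_inner_def sum_distrib_left sum.distrib[symmetric]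
      by (intro sum.cong refl) (simp add: algebra_simps)
    have rhs: "(\<Sum>a\<in>UNIV. \<Sum>p\<in>UNIV. \<Sum>i\<in>UNIV. \<Sum>j\<in>UNIV. A$i$j * ((\<sigma>$i \<bullet> \<sigma>$j) * ((u a p $ i \<bullet> u a p $ i) + (u a p $ j \<bullet> u a p $ j)) / 2))
       = (k - 1) * F_A A \<sigma>"
    proof -
      have d: "(\<Sum>a\<in>UNIV. \<Sum>p\<in>UNIV. u a p $ i \<bullet> u a p $ i) = k - 1" for i
        unfolding uu using dX n1 by simp
      have "(\<Sum>a\<in>UNIV. \<Sum>p\<in>UNIV. (\<sigma>$i \<bullet> \<sigma>$j) * ((u a p $ i \<bullet> u a p $ i) + (u a p $ j \<bullet> u a p $ j)) / 2)
         = (\<sigma>$i \<bullet> \<sigma>$j) * ((\<Sum>a\<in>UNIV. \<Sum>p\<in>UNIV. u a p $ i \<bullet> u a p $ i) + (\<Sum>a\<in>UNIV. \<Sum>p\<in>UNIV. u a p $ j \<bullet> u a p $ j)) / 2" for i j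
        by (simp only: sum_divide_distrib[symmetric] sum_distrib_left[symmetric] sum.distrib)
      note gen = this
      have inn: "(\<Sum>a\<in>UNIV. \<Sum>p\<in>UNIV. (\<sigma>$i \<bullet> \<sigma>$j) * ((u a p $ i \<bullet> u a p $ i) + (u a p $ j \<bullet> u a p $ j)) / 2)
         = (k - 1) * (\<sigma>$i \<bullet> \<sigma>$j)" for i j
      proof -
        have "(\<Sum>a\<in>UNIV. \<Sum>p\<in>UNIV. (\<sigma>$i \<bullet> \<sigma>$j) * ((u a p $ i \<bullet> u a p $ i) + (u a p $ j \<bullet> u a p $ j)) / 2)
          = (\<sigma>$i \<bullet> \<sigma>$j) * ((k - 1) + (k - 1)) / 2"
          using gen[of i j] unfolding d .
        then show ?thesis by (simp add: algebra_simps)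
      qed
      show ?thesis unfolding swap4 inn F_A_def sum_distrib_left
        by (intro sum.cong refl) (simp add: algebra_simps)
    qed
    define Y where "Y = (\<chi> i j. X$i$j * (\<sigma>$i \<bullet> \<sigma>$j) * (\<sigma>$i \<bullet> \<sigma>$j))"
    define z1 where "z1 = (\<lambda>qr::'n \<times> 'k. (\<chi> l. w (fst qr) $ l * y (snd qr) $ l))"
    have Y1: "X$i$j * (\<sigma>$i \<bullet> \<sigma>$j) = (\<Sum>q\<in>UNIV \<times> UNIV. z1 q $ i * z1 q $ j)" for i j
      unfolding w[rule_format] Srep z1_def by (rule hadamard_rep) auto
    have Yrep: "Y$i$j = (\<Sum>q\<in>(UNIV \<times> UNIV) \<times> UNIV. (\<chi> l. z1 (fst q) $ l * y (snd q) $ l) $ i * (\<chi> l. z1 (fst q) $ l * y (snd q) $ l) $ j)" for i j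
    proof -
      have "Y$i$j = (\<Sum>q\<in>UNIV \<times> UNIV. z1 q $ i * z1 q $ j) * (\<Sum>a\<in>UNIV. y a $ i * y a $ j)"
        unfolding Y_def vec_lambda_beta Y1[symmetric] Srep[symmetric] by simp
      then show ?thesis using hadamard_rep[of "UNIV \<times> UNIV" UNIV z1 i j y] by simp
    qed
    have "\<bar>mat_inner A Y\<bar> \<le> L * (\<Sum>i\<in>UNIV. Y$i$i)"
      unfolding L_def by (rule GL[OF _ Yrep]) auto
    moreover have "(\<Sum>i\<in>UNIV. Y$i$i) = n" unfolding Y_def n_def using dX n1 by simp
    ultimately have Yb: "mat_inner A Y \<ge> - (n * L)" by (simp add: mult.commute)
    have MY: "mat_inner A Y = (\<Sum>i\<in>UNIV. \<Sum>j\<in>UNIV. A$i$j * (X$i$j * (\<sigma>$i \<bullet> \<sigma>$j) * (\<sigma>$i \<bullet> \<sigma>$j)))"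
      unfolding mat_inner_def Y_def by simp
    have "(k - 2) * mat_inner A X + mat_inner A Y \<le> (k - 1) * F_A A \<sigma>"
      using soc_all lhs rhs MY by simp
    then have lt: "(k - 1) * mat_inner A X \<le> (k - 1) * F_A A \<sigma> + 2 * n * L"
      using Yb upper[OF psdX dX] by (simp add: algebra_simps)
    have eq: "(k - 1) * (2 * n * L / (k - 1)) = 2 * n * L" using k2 by simp
    have "(k - 1) * mat_inner A X \<le> (k - 1) * (F_A A \<sigma> + 2 * n * L / (k - 1))"
      unfolding distrib_left eq by (rule lt)
    then show ?thesis using k2 by (simp add: mult_le_cancel_left_pos)
  qed
  have ne: "Feas \<noteq> {}" using FinFeas by blast
  have "SDP A \<le> F_A A \<sigma> + 2 * n * L / (k - 1)"
    unfolding SDPd by (rule cSup_least[OF ne]) (auto simp: Feas_def intro: main)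
  moreover have "2 * n * L / (k - 1) \<le> 8 / sqrt k * n * L"
  proof -
    have sk: "sqrt k \<le> k" using k2 by (simp add: real_sqrt_le_iff' power2_eq_square)
    have skp: "sqrt k > 0" using k2 by simp
    have "2 / (k - 1) \<le> 8 / sqrt k"
      using k2 sk skp by (simp add: divide_simps)
    moreover have "n * L \<ge> 0" unfolding n_def using L0 by simp
    ultimately have "2 / (k - 1) * (n * L) \<le> 8 / sqrt k * (n * L)" by (rule mult_right_mono)
    then show ?thesis by (simp add: mult.assoc)
  qed
  ultimately have "F_A A \<sigma> \<ge> SDP A - 8 / sqrt k * n * L" by linarith
  then show ?thesis using part1 unfolding k_def n_def L_def by simp
qed

end
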